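(* Let $N,k$ be positive integers with $k\le N/2$, and for a real $c\ge3$ with $N/c$ a positive integer define $$\gamma(N,k,c)=\sum_{m=0}^{\lfloor k/2\rfloor}\binom{N/c}{m}^2\binom{(1-2/c)N}{k-2m}.$$ Then $\big(\binom{N}{k}-\gamma(N,k,c)\big)/\binom{N}{k}=O(k/c)$, with an absolute implied constant, for every such $c\ge3$.
   Context: $\big(\binom{N}{k}-\gamma(N,k,c)\big)/\binom{N}{k}$ equals the probability that a balance with $N/c$ coins on each pan is tilted, when the placed coins are chosen among $N$ coins of which $k$ uniformly random ones are false (all false coins having equal weight). *)

theory Defs
  imports Complex_Main
begin

text \<open>The binomial arguments N/c and (1-2/c)N are natural numbers whenever N/c is a
  positive integer and c >= 2; they are converted to nat via floor (exact in that case).\<close>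
definition gamma :: "nat \<Rightarrow> nat \<Rightarrow> real \<Rightarrow> real" where
  "gamma N k c =
     (\<Sum>m = 0..k div 2.
        real ((nat \<lfloor>real N / c\<rfloor>) choose m) ^ 2
        * real ((nat \<lfloor>(1 - 2 / c) * real N\<rfloor>) choose (k - 2 * m)))"

end

theory Submission
  imports Defs
begin

lemma choose_mono_up: "(n choose k) \<le> (Suc n choose k)"
  by (cases k) auto

lemma choose_mono_up': "n \<le> m \<Longrightarrow> (n choose k) \<le> (m choose k)"
  by (induction m rule: dec_induct) (auto intro: order_trans[OF _ choose_mono_up])

lemma tele: "(M + d choose Suc j) \<le> (M choose Suc j) + d * ((M + d) - 1 choose j)"
proof (induction d)
  case 0 then show ?case by simp
next
  case (Suc d)
  have "(M + Suc d choose Suc j) = (M + d choose Suc j) + (M + d choose j)" by simp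
  also have "\<dots> \<le> (M choose Suc j) + d * ((M + d) - 1 choose j) + (M + d choose j)"
    using Suc by simp
  also have "\<dots> \<le> (M choose Suc j) + Suc d * ((M + Suc d) - 1 choose j)"
    using choose_mono_up'[of "M + d - 1" "M + d" j] by simp
  finally show ?case .
qed

lemma gamma_le:
  "(\<Sum>m = 0..k div 2. (n choose m)^2 * (M choose (k - 2*m))) \<le> ((2*n + M) choose k)"
proof -
  define g where "g j = ((2*n) choose j) * (M choose (k - j))" for j
  have "(\<Sum>m = 0..k div 2. (n choose m)^2 * (M choose (k - 2*m))) \<le> (\<Sum>m = 0..k div 2. g (2*m))"
  proof (rule sum_mono)
    fix m assume "m \<in> {0..k div 2}"
    have "(n choose m)^2 = (n choose m) * (n choose (2*m - m))" by (simp add: power2_eq_square)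
    also have "\<dots> \<le> (\<Sum>i\<le>2*m. (n choose i) * (n choose (2*m - i)))"
      by (rule member_le_sum) auto
    also have "\<dots> = (2*n) choose (2*m)" using vandermonde[of n n "2*m"] by (simp add: mult_2)
    finally show "(n choose m)^2 * (M choose (k - 2*m)) \<le> g (2*m)"
      unfolding g_def by simp
  qed
  also have "\<dots> = sum g ((\<lambda>m. 2*m) ` {0..k div 2})"
    by (subst sum.reindex) (auto simp: inj_on_def)
  also have "\<dots> \<le> sum g {..k}"
    by (rule sum_mono2) auto
  also have "\<dots> = ((2*n + M) choose k)" unfolding g_def using vandermonde[of "2*n" M k] by simp
  finally show ?thesis .
qed

theorem lemma6:
  shows "\<exists>C::real. \<forall>(N::nat) (k::nat) (c::real).
           k \<ge> 1 \<and> 2 * k \<le> N \<and> c \<ge> 3 \<and> (\<exists>n::nat. n \<ge> 1 \<and> real N / c = real n) \<longrightarrow>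
           \<bar>(real (N choose k) - gamma N k c) / real (N choose k)\<bar> \<le> C * real k / c"
proof (intro exI[of _ 2] allI impI)
  fix N k :: nat and c :: real
  assume "k \<ge> 1 \<and> 2 * k \<le> N \<and> c \<ge> 3 \<and> (\<exists>n::nat. n \<ge> 1 \<and> real N / c = real n)"
  then obtain n where k1: "k \<ge> 1" and kN: "2*k \<le> N" and c3: "c \<ge> 3" and n1: "n \<ge> 1"
    and nN: "real N / c = real n" by auto
  have Nc: "real N = c * real n" using nN c3 by (simp add: field_simps)
  have N3: "3 * n \<le> N"
  proof -
    have "real (3*n) \<le> real N" using Nc c3 n1 by (simp add: mult_right_mono)
    then show ?thesis by linarith
  qed
  define M where "M = N - 2*n"
  have NM: "N = 2*n + M" using N3 unfolding M_def by simp
  have f1: "nat \<lfloor>real N / c\<rfloor> = n" using nN by simp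
  have "(1 - 2 / c) * real N = real N - 2 * (real N / c)" using c3 by (simp add: field_simps)
  also have "\<dots> = real M" using nN N3 unfolding M_def by simp
  finally have f2: "nat \<lfloor>(1 - 2 / c) * real N\<rfloor> = M" by simp
  define G where "G = (\<Sum>m = 0..k div 2. (n choose m)^2 * (M choose (k - 2*m)))"
  have gam: "gamma N k c = real G"
    unfolding gamma_def f1 f2 G_def by simp
  have Gle: "G \<le> N choose k" using gamma_le[of n M k] NM G_def by simp
  have Glow: "M choose k \<le> G" unfolding G_def
    by (rule order_trans[OF _ member_le_sum[of 0]]) auto
  obtain j where kj: "k = Suc j" using k1 by (cases k) auto
  have T: "(N choose k) \<le> (M choose k) + 2*n * (N - 1 choose j)"
    using tele[of M "2*n" j] NM kj by (simp add: add.commute)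
  have A: "k * (N choose k) = N * (N - 1 choose j)"
    using times_binomial_minus1_eq[of k N] kj by simp
  have pos: "0 < N choose k" using kN by simp
  have Npos: "0 < N" using kN k1 by simp
  have T': "real (N choose k) \<le> real ((M choose k) + 2*n*(N - 1 choose j))"
    using T by (simp only: of_nat_le_iff)
  have diff: "real (N choose k) - real G \<le> 2 * real n * real (N - 1 choose j)"
    using T' Glow by (simp add: of_nat_le_iff)
  have A': "real (N - 1 choose j) = real k * real (N choose k) / real N"
    using A Npos by (simp add: field_simps) (metis of_nat_mult)
  have B0: "0 < real (N choose k)" using pos by simp
  have GB: "real G \<le> real (N choose k)" using Gle by simp
  have q0: "0 \<le> (real (N choose k) - real G) / real (N choose k)"
    using GB B0 by simp
  have "(real (N choose k) - real G) / real (N choose k) \<le> 2 * real n * real (N - 1 choose j) / real (N choose k)"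
    using diff B0 by (simp add: divide_right_mono)
  also have "\<dots> = 2 * real n * real k / real N" using A' B0 by simp
  also have "\<dots> = 2 * real k / c" using Nc n1 c3 by (simp add: field_simps)
  finally show "\<bar>(real (N choose k) - gamma N k c) / real (N choose k)\<bar> \<le> 2 * real k / c"
    using q0 gam by simp
qed

end
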